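(* Let $A,B,C$ be projective cameras with distinct centers, and let $\pi$ be a correspondence of one of the types PLL, LLL, PPL, PLP, PPP for $(A,B,C)$. Assume $\pi$ avoids epipoles, i.e. every image point of $\pi$ in the view of camera $i$ is different from both epipoles in view $i$, and every image line of $\pi$ in view $i$ contains neither epipole in view $i$. If $\pi$ lies in the corresponding multi-view variety $X^{\ast}_{A,B,C}$, then $\pi$ is consistent with $(A,B,C)$.
   Context: A projective camera is a full-rank matrix in $\mathbb{C}^{3\times4}$ up to scalar with center its kernel in $\mathbb{P}^3$; $\alpha,\beta,\gamma$ denote the projections given by $A,B,C$. Epipoles: $e_{1\leftarrow2}=\alpha(\ker B)$, $e_{1\leftarrow3}=\alpha(\ker C)$ in view 1; $e_{2\leftarrow1}=\beta(\ker A)$, $e_{2\leftarrow3}=\beta(\ker C)$ in view 2; $e_{3\leftarrow1}=\gamma(\ker A)$, $e_{3\leftarrow2}=\gamma(\ker B)$ in view 3. Types: PLL $\in\mathbb{P}^2\times(\mathbb{P}^2)^\vee\times(\mathbb{P}^2)^\vee$, LLL $\in((\mathbb{P}^2)^\vee)^3$, PPL $\in\mathbb{P}^2\times\mathbb{P}^2\times(\mathbb{P}^2)^\vee$, PLP $\in\mathbb{P}^2\times(\mathbb{P}^2)^\vee\times\mathbb{P}^2$, PPP $\in(\mathbb{P}^2)^3$. With $\mathcal{F\ell}_{0,1}=\{(X,L): X\in L\}\subset\mathbb{P}^3\times\mathrm{Gr}(\mathbb{P}^1,\mathbb{P}^3)$, the multi-view variety of each type is the Zariski closure of the image of the rational map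 sending $(X,L)\in\mathcal{F\ell}_{0,1}$ (or $L$ for LLL, $X$ for PPP) to the triple whose $i$-th entry is the image of $X$ under camera $i$ if the $i$-th factor is a point and the image of $L$ if it is a line. $(A,B,C)$ is consistent with $\pi$ if there exist $X\in\mathbb{P}^3$ and a line $L\ni X$ such that each camera maps $X$ (resp. $L$) exactly to the given image point (resp. image line) in its factor, these images being defined. *)

theory Defs
  imports "HOL-Analysis.Analysis"
begin

text \<open>Homogeneous coordinates.  A point of P^n is represented by a nonzero vector
  of complex^(n+1); a line of P^2 (element of the dual plane) by a nonzero covector
  u in complex^3, the line being {v. bdot u v = 0}.  A line of P^3 is a
  2-dimensional (complex-linear) subspace of complex^4.\<close>

definition bdot :: "complex^3 \<Rightarrow> complex^3 \<Rightarrow> complex" where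
  "bdot u v = (\<Sum>i\<in>UNIV. u $ i * v $ i)"

definition projeq :: "'a::field^'n \<Rightarrow> 'a^'n \<Rightarrow> bool" where
  "projeq u v \<longleftrightarrow> u \<noteq> 0 \<and> v \<noteq> 0 \<and> (\<exists>c. c \<noteq> 0 \<and> u = c *s v)"

text \<open>Projective camera: full-rank 3x4 complex matrix.\<close>
definition camera :: "complex^4^3 \<Rightarrow> bool" where
  "camera A \<longleftrightarrow> rank A = 3"

text \<open>Center of a camera (as the kernel subspace; a single projective point).\<close>
definition center :: "complex^4^3 \<Rightarrow> (complex^4) set" where
  "center A = {v. A *v v = 0}"

text \<open>Lines of P^3 and the point-line flag variety.\<close>
definition is_line3 :: "(complex^4) set \<Rightarrow> bool" where
  "is_line3 L \<longleftrightarrow> vec.subspace L \<and> vec.dim L = 2"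

definition flag :: "complex^4 \<Rightarrow> (complex^4) set \<Rightarrow> bool" where
  "flag X L \<longleftrightarrow> X \<noteq> 0 \<and> is_line3 L \<and> X \<in> L"

datatype kind = Pt | Line

text \<open>The i-th factor u of a triple is the (defined) image of the flag (X,L)
  under camera A: the image of X if the factor is a point, the image of L if it
  is a line.\<close>
definition img_factor :: "kind \<Rightarrow> complex^4^3 \<Rightarrow> complex^4 \<Rightarrow> (complex^4) set \<Rightarrow> complex^3 \<Rightarrow> bool" where
  "img_factor k A X L u = (case k of
      Pt \<Rightarrow> A *v X \<noteq> 0 \<and> projeq u (A *v X)
    | Line \<Rightarrow> vec.dim ((\<lambda>v. A *v v) ` L) = 2 \<and> u \<noteq> 0 \<and>
            (\<lambda>v. A *v v) ` L = {w. bdot u w = 0})"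

text \<open>Consistency of a correspondence pi = (u1,u2,u3) of type (k1,k2,k3).\<close>
definition consistent ::
  "kind \<times> kind \<times> kind \<Rightarrow> complex^4^3 \<Rightarrow> complex^4^3 \<Rightarrow> complex^4^3 \<Rightarrow>
   (complex^3) \<times> (complex^3) \<times> (complex^3) \<Rightarrow> bool" where
  "consistent t A B C p \<longleftrightarrow>
     (case t of (k1, k2, k3) \<Rightarrow> case p of (u1, u2, u3) \<Rightarrow>
       (\<exists>X L. flag X L \<and> img_factor k1 A X L u1 \<and> img_factor k2 B X L u2 \<and>
              img_factor k3 C X L u3))"

text \<open>Image of the rational map (all homogeneous representatives, i.e. the affine
  multi-cone over the image in the product of projective planes).\<close>
definition mv_image ::
  "kind \<times> kind \<times> kind \<Rightarrow> complex^4^3 \<Rightarrow> complex^4^3 \<Rightarrow> complex^4^3 \<Rightarrow>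
   ((complex^3) \<times> (complex^3) \<times> (complex^3)) set" where
  "mv_image t A B C = {p. case t of (k1, k2, k3) \<Rightarrow> case p of (u1, u2, u3) \<Rightarrow>
       (\<exists>X L. flag X L \<and> img_factor k1 A X L u1 \<and> img_factor k2 B X L u2 \<and>
              img_factor k3 C X L u3)}"

text \<open>Polynomial functions in the 9 coordinates of complex^3 x complex^3 x complex^3.\<close>
inductive_set polyfun :: "(((complex^3) \<times> (complex^3) \<times> (complex^3)) \<Rightarrow> complex) set" where
  const: "(\<lambda>_. c) \<in> polyfun"
| coord1: "(\<lambda>(x, y, z). x $ i) \<in> polyfun"
| coord2: "(\<lambda>(x, y, z). y $ i) \<in> polyfun"
| coord3: "(\<lambda>(x, y, z). z $ i) \<in> polyfun"
| add: "f \<in> polyfun \<Longrightarrow> g \<in> polyfun \<Longrightarrow> (\<lambda>p. f p + g p) \<in> polyfun"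
| mult: "f \<in> polyfun \<Longrightarrow> g \<in> polyfun \<Longrightarrow> (\<lambda>p. f p * g p) \<in> polyfun"

definition zariski_closure ::
  "((complex^3) \<times> (complex^3) \<times> (complex^3)) set \<Rightarrow> ((complex^3) \<times> (complex^3) \<times> (complex^3)) set" where
  "zariski_closure S = {p. \<forall>f\<in>polyfun. (\<forall>s\<in>S. f s = 0) \<longrightarrow> f p = 0}"

text \<open>Multi-view variety, as the set of representatives (u1,u2,u3) with all ui nonzero
  of points of the Zariski closure of the image in (P^2 or dual P^2)^3.\<close>
definition multiview_variety ::
  "kind \<times> kind \<times> kind \<Rightarrow> complex^4^3 \<Rightarrow> complex^4^3 \<Rightarrow> complex^4^3 \<Rightarrow>
   ((complex^3) \<times> (complex^3) \<times> (complex^3)) set" where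
  "multiview_variety t A B C =
     {(u1, u2, u3). u1 \<noteq> 0 \<and> u2 \<noteq> 0 \<and> u3 \<noteq> 0} \<inter> zariski_closure (mv_image t A B C)"

text \<open>Factor u (of kind k) in the view of camera A avoids the epipole A(ker B).\<close>
definition avoids_epipole :: "kind \<Rightarrow> complex^4^3 \<Rightarrow> complex^4^3 \<Rightarrow> complex^3 \<Rightarrow> bool" where
  "avoids_epipole k A B u = (\<forall>c. c \<noteq> 0 \<and> B *v c = 0 \<longrightarrow>
      (case k of Pt \<Rightarrow> \<not> projeq u (A *v c) | Line \<Rightarrow> bdot u (A *v c) \<noteq> 0))"

definition avoids_epipoles ::
  "kind \<times> kind \<times> kind \<Rightarrow> complex^4^3 \<Rightarrow> complex^4^3 \<Rightarrow> complex^4^3 \<Rightarrow>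
   (complex^3) \<times> (complex^3) \<times> (complex^3) \<Rightarrow> bool" where
  "avoids_epipoles t A B C p \<longleftrightarrow>
     (case t of (k1, k2, k3) \<Rightarrow> case p of (u1, u2, u3) \<Rightarrow>
        avoids_epipole k1 A B u1 \<and> avoids_epipole k1 A C u1 \<and>
        avoids_epipole k2 B A u2 \<and> avoids_epipole k2 B C u2 \<and>
        avoids_epipole k3 C A u3 \<and> avoids_epipole k3 C B u3)"

end

theory Submission
  imports Defs
begin

lemma polyfun_sum: "finite S \<Longrightarrow> (\<And>i. i \<in> S \<Longrightarrow> f i \<in> polyfun) \<Longrightarrow> (\<lambda>p. \<Sum>i\<in>S. f i p) \<in> polyfun"
proof (induction S rule: finite_induct)
  case empty then show ?case using polyfun.const[of 0] by simp
next
  case (insert x F) then show ?case using polyfun.add[of "f x" "\<lambda>p. \<Sum>i\<in>F. f i p"] by simp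
qed

lemma polyfun_prod: "finite S \<Longrightarrow> (\<And>i. i \<in> S \<Longrightarrow> f i \<in> polyfun) \<Longrightarrow> (\<lambda>p. \<Prod>i\<in>S. f i p) \<in> polyfun"
proof (induction S rule: finite_induct)
  case empty then show ?case using polyfun.const[of 1] by simp
next
  case (insert x F) then show ?case using polyfun.mult[of "f x" "\<lambda>p. \<Prod>i\<in>F. f i p"] by simp
qed

lemma polyfun_cmult: "f \<in> polyfun \<Longrightarrow> (\<lambda>p. c * f p) \<in> polyfun"
  using polyfun.mult[OF polyfun.const[of c]] by simp

lemma polyfun_det:
  fixes F :: "_ \<Rightarrow> complex^'n^'n"
  assumes "\<And>i j. (\<lambda>s. F s $ i $ j) \<in> polyfun"
  shows "(\<lambda>s. det (F s)) \<in> polyfun"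
  unfolding det_def
  by (intro polyfun_sum polyfun_prod polyfun_cmult assms) auto

lemma polyfun_mmult:
  fixes F :: "_ \<Rightarrow> complex^'n^'m" and R :: "complex^'m^'k"
  assumes "\<And>i j. (\<lambda>s. F s $ i $ j) \<in> polyfun"
  shows "(\<lambda>s. (R ** F s) $ i $ j) \<in> polyfun"
  unfolding matrix_matrix_mult_def
  by (simp, intro polyfun_sum polyfun_cmult assms) auto

lemma closure_noninj:
  fixes F :: "_ \<Rightarrow> complex^'n^'m"
  assumes p: "p \<in> zariski_closure S"
    and img: "\<And>s. s \<in> S \<Longrightarrow> \<exists>v. v \<noteq> 0 \<and> F s *v v = 0"
    and pf: "\<And>i j. (\<lambda>s. F s $ i $ j) \<in> polyfun"
  shows "\<exists>v. v \<noteq> 0 \<and> F p *v v = 0"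
proof (rule ccontr)
  assume "\<not> ?thesis"
  then have "\<forall>x. F p *v x = 0 \<longrightarrow> x = 0" by blast
  then obtain R where R: "R ** F p = mat 1"
    using matrix_left_invertible_ker by blast
  define f where "f s = det (R ** F s)" for s
  have fpf: "f \<in> polyfun" unfolding f_def
    by (intro polyfun_det polyfun_mmult pf)
  have "f s = 0" if sS: "s \<in> S" for s
  proof -
    obtain v where v: "v \<noteq> 0" "F s *v v = 0" using img[OF sS] by blast
    have "(R ** F s) *v v = 0" by (simp add: v(2) flip: matrix_vector_mul_assoc)
    then have "\<not> inj ((*v) (R ** F s))" using v(1)
      by (metis matrix_vector_mult_0_right injD)
    then show ?thesis unfolding f_def
      using det_nz_iff_inj_gen[of "(*v) (R ** F s)"] by simp
  qed
  then have "f p = 0" using p fpf unfolding zariski_closure_def by blast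
  then show False unfolding f_def R by simp
qed

lemma ker_exists:
  fixes M :: "'a::field^'n^'m"
  assumes "CARD('m) < CARD('n)"
  shows "\<exists>x. x \<noteq> 0 \<and> M *v x = 0"
proof (rule ccontr)
  assume "\<not> ?thesis"
  then have "inj ((*v) M)" unfolding vec.inj_iff_eq_0 by blast
  then have "vec.dim (range ((*v) M)) = vec.dim (UNIV :: ('a^'n) set)"
    by (intro vec.dim_image_eq) (auto intro: inj_on_subset)
  moreover have "vec.dim (range ((*v) M)) \<le> CARD('m)" by (rule dim_subset_UNIV_cart_gen)
  ultimately show False using assms by (simp add: vec_dim_card card_cart_basis)
qed

lemma dim_cap:
  fixes S T :: "('a::field^'n) set"
  assumes "vec.subspace S" "vec.subspace T" "S \<inter> T \<subseteq> {0}"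
  shows "vec.dim S + vec.dim T \<le> CARD('n)"
proof -
  have "S \<inter> T = {0}" using assms vec.subspace_0 by blast
  then have "vec.dim (S \<inter> T) = 0" by simp
  moreover have "vec.dim {x + y |x y. x \<in> S \<and> y \<in> T} \<le> CARD('n)" by (rule dim_subset_UNIV_cart_gen)
  ultimately show ?thesis using vec.dim_sums_Int[OF assms(1,2)] by linarith
qed

lemma indep2:
  fixes x y :: "'a::field^'n"
  assumes "x \<noteq> 0" "y \<notin> vec.span {x}"
  shows "vec.independent {x, y}" "vec.dim (vec.span {x, y}) = 2"
proof -
  have xy: "x \<noteq> y" using assms vec.span_base by blast
  have "vec.independent {y, x}"
    using assms by (intro vec.independent_insertI vec.independent_empty) (auto simp: vec.span_empty)
  then show i: "vec.independent {x, y}" by (simp add: insert_commute)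
  show "vec.dim (vec.span {x, y}) = 2"
    using vec.dim_span_eq_card_independent[OF i] xy by simp
qed

lemma hyper_dim:
  fixes u :: "'a::field^'n"
  assumes "u \<noteq> 0"
  shows "vec.dim {w. (\<Sum>i\<in>UNIV. u $ i * w $ i) = 0} < CARD('n)"
proof -
  let ?H = "{w. (\<Sum>i\<in>UNIV. u $ i * w $ i) = 0}"
  have e1: "(\<Sum>i\<in>UNIV. u $ i * (x + y) $ i) = (\<Sum>i\<in>UNIV. u $ i * x $ i) + (\<Sum>i\<in>UNIV. u $ i * y $ i)" for x y
    by (simp add: distrib_left sum.distrib)
  have e2: "(\<Sum>i\<in>UNIV. u $ i * (c *s x) $ i) = c * (\<Sum>i\<in>UNIV. u $ i * x $ i)" for c x
    by (simp add: sum_distrib_left algebra_simps)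
  have sub: "vec.subspace ?H"
    unfolding vec.subspace_def using e1 e2 by simp
  obtain k where k: "u $ k \<noteq> 0" using assms by (metis vec_eq_iff zero_index)
  have "(\<Sum>i\<in>UNIV. u $ i * axis k 1 $ i) = (\<Sum>i\<in>UNIV. if i = k then u $ i else 0)"
    by (intro sum.cong) (auto simp: axis_def)
  then have "axis k 1 \<notin> ?H" using k by simp
  moreover have "vec.span ?H = ?H" using sub by simp
  ultimately have "vec.span ?H \<subset> vec.span UNIV" by (metis psubsetI subset_UNIV vec.span_UNIV UNIV_I)
  then have "vec.dim ?H < vec.dim (UNIV :: ('a^'n) set)" by (rule vec.dim_psubset)
  then show ?thesis by (simp add: vec_dim_card card_cart_basis)
qed

lemma right_inv:
  fixes A :: "'a::field^'n^'m"
  assumes "vec.dim (rows A) = CARD('m)"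
  shows "\<exists>G. A ** G = mat 1"
  unfolding matrix_right_invertible_independent_rows
proof (intro allI impI ballI, rule ccontr)
  fix c k
  assume c: "(\<Sum>i\<in>UNIV. c i *s row i A) = 0" and ck: "c k \<noteq> 0"
  let ?S = "(\<lambda>i. row i A) ` (UNIV - {k})"
  have "c k *s row k A = - (\<Sum>i\<in>UNIV - {k}. c i *s row i A)"
    using c by (simp add: sum.remove[of UNIV k] eq_neg_iff_add_eq_0)
  also have "\<dots> \<in> vec.span ?S"
    by (intro vec.span_neg vec.span_sum vec.span_scale vec.span_base) auto
  finally have "(1 / c k) *s (c k *s row k A) \<in> vec.span ?S" by (rule vec.span_scale)
  then have rk: "row k A \<in> vec.span ?S" using ck by simp
  have "rows A \<subseteq> insert (row k A) ?S" unfolding rows_def by auto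
  then have "rows A \<subseteq> vec.span ?S" using rk vec.span_superset by blast
  then have "vec.dim (rows A) \<le> card ?S" by (intro vec.dim_le_card) auto
  also have "\<dots> \<le> card (UNIV - {k})" by (rule card_image_le) auto
  also have "\<dots> < CARD('m)" by (simp add: card_Diff_singleton)
  finally show False using assms by simp
qed

lemma cam_right_inv: "camera A \<Longrightarrow> \<exists>G. A ** G = mat 1"
  unfolding camera_def row_rank_def_gen by (rule right_inv) simp

lemma ker_sub:
  fixes A :: "'a::field^'n^'m"
  shows "vec.subspace {v. A *v v = 0}"
  unfolding vec.subspace_def by (auto simp: matrix_vector_right_distrib vec.scale)

lemma ker_1dim:
  assumes "camera A" "A *v X = 0" "X \<noteq> 0" "A *v y = 0"
  shows "y \<in> vec.span {X}"
proof (rule ccontr)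
  assume ny: "y \<notin> vec.span {X}"
  obtain G where G: "A ** G = mat 1" using cam_right_inv[OF assms(1)] by blast
  have injG: "inj ((*v) G)"
    unfolding vec.inj_iff_eq_0
    by (metis G matrix_vector_mul_assoc matrix_vector_mul_lid matrix_vector_mult_0_right)
  have d3: "vec.dim (range ((*v) G)) = 3"
    using vec.dim_image_eq[of "(*v) G" UNIV] injG by (simp add: vec_dim_card inj_on_subset card_cart_basis)
  have d2: "vec.dim (vec.span {X, y}) = 2" using indep2[OF assms(3) ny] by simp
  have sK: "vec.span {X, y} \<subseteq> {v. A *v v = 0}"
    using assms by (intro vec.span_minimal ker_sub) auto
  have "range ((*v) G) \<inter> vec.span {X, y} \<subseteq> {0}"
  proof
    fix v assume "v \<in> range ((*v) G) \<inter> vec.span {X, y}"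
    then obtain w where w: "v = G *v w" "A *v v = 0" using sK by auto
    then have "w = 0" by (metis G matrix_vector_mul_assoc matrix_vector_mul_lid)
    then show "v \<in> {0}" using w by simp
  qed
  then have "vec.dim (range ((*v) G)) + vec.dim (vec.span {X, y}) \<le> CARD(4)"
    by (intro dim_cap) (auto intro: vec.subspace_UNIV vec.subspace_image)
  then show False using d3 d2 by simp
qed

lemma centers_eq:
  assumes "camera A" "camera B" "A *v X = 0" "B *v X = 0" "X \<noteq> 0"
  shows "center A = center B"
proof -
  have "center A \<subseteq> vec.span {X}" using ker_1dim[OF assms(1,3,5)] unfolding center_def by auto
  moreover have "center B \<subseteq> vec.span {X}" using ker_1dim[OF assms(2,4,5)] unfolding center_def by auto
  moreover have "vec.span {X} \<subseteq> center A" unfolding center_def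
    by (rule vec.span_minimal) (use assms ker_sub in auto)
  moreover have "vec.span {X} \<subseteq> center B" unfolding center_def
    by (rule vec.span_minimal) (use assms ker_sub in auto)
  ultimately show ?thesis by blast
qed

lemma avoid_line:
  fixes X :: "'a::field^'n" and Q :: "'a^'n^'m"
  assumes "X \<noteq> 0" "CARD('m) + 1 < CARD('n)"
  shows "\<exists>Y. Y \<notin> vec.span {X} \<and> Q *v Y = 0"
proof -
  obtain i where i: "X $ i \<noteq> 0" using assms by (metis vec_eq_iff zero_index)
  define N :: "'a^'n^('m option)" where "N = (\<chi> r. case r of None \<Rightarrow> axis i 1 | Some k \<Rightarrow> Q $ k)"
  have "CARD('m option) < CARD('n)" using assms by (simp add: card_UNIV_option)
  then obtain Y where Y: "Y \<noteq> 0" "N *v Y = 0" using ker_exists by blast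
  have "(N *v Y) $ None = (\<Sum>j\<in>UNIV. axis i 1 $ j * Y $ j)" by (simp add: N_def matrix_vector_mult_def)
  also have "\<dots> = (\<Sum>j\<in>UNIV. (if j = i then Y $ j else 0))"
    by (intro sum.cong) (auto simp: axis_def)
  also have "\<dots> = Y $ i" by simp
  finally have Yi: "Y $ i = 0" using Y by simp
  have "(Q *v Y) $ k = (N *v Y) $ Some k" for k unfolding N_def matrix_vector_mult_def by simp
  then have "Q *v Y = 0" using Y by (simp add: vec_eq_iff)
  moreover have "Y \<notin> vec.span {X}"
  proof
    assume "Y \<in> vec.span {X}"
    then obtain c where "Y = c *s X" by (auto simp: vec.span_singleton)
    then show False using Yi i Y(1) by auto
  qed
  ultimately show ?thesis by blast
qed

lemma bdot_sub: "vec.subspace {v. bdot u (A *v v) = 0}"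
proof -
  have e1: "bdot u (x + y) = bdot u x + bdot u y" for x y
    by (simp add: bdot_def distrib_left sum.distrib)
  have e2: "bdot u (c *s x) = c * bdot u x" for c x
    by (simp add: bdot_def sum_distrib_left algebra_simps)
  show ?thesis unfolding vec.subspace_def
    using e1 e2 by (simp add: matrix_vector_right_distrib vec.scale bdot_def)
qed

lemma bdot_sub2: "vec.subspace {w. bdot u w = 0}"
  using bdot_sub[of u "mat 1"] by simp

definition plane :: "complex^4^3 \<Rightarrow> complex^3 \<Rightarrow> complex^4" where
  "plane A u = (\<chi> j. \<Sum>r\<in>UNIV. u $ r * A $ r $ j)"

lemma plane_dot: "(\<Sum>j\<in>UNIV. plane A u $ j * v $ j) = bdot u (A *v v)"
  unfolding plane_def bdot_def matrix_vector_mult_def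
  by (simp add: sum_distrib_left sum_distrib_right mult.assoc) (rule sum.swap)

lemma line_img:
  fixes A :: "complex^4^3"
  assumes u: "u \<noteq> 0" and hX: "bdot u (A *v X) = 0" and hY: "bdot u (A *v Y) = 0"
    and nX: "A *v X \<noteq> 0" and nY: "A *v Y \<notin> vec.span {A *v X}"
  shows "img_factor Line A X (vec.span {X, Y}) u"
proof -
  let ?H = "{w. bdot u w = 0}"
  have im: "(\<lambda>v. A *v v) ` vec.span {X, Y} = vec.span {A *v X, A *v Y}"
    using vec.span_image[of A "{X, Y}"] by simp
  have d2: "vec.dim (vec.span {A *v X, A *v Y}) = 2" using indep2[OF nX nY] by simp
  have sub: "vec.span {A *v X, A *v Y} \<subseteq> ?H"
    by (rule vec.span_minimal) (use hX hY bdot_sub2 in auto)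
  have "vec.dim ?H < 3" using hyper_dim[OF u] by (simp add: bdot_def)
  then have "vec.span {A *v X, A *v Y} = ?H"
    using d2 sub bdot_sub2 by (intro vec.subspace_dim_equal) auto
  then show ?thesis unfolding img_factor_def using im d2 u by simp
qed

lemma pt_img:
  assumes "A *v X + m *s u = 0" "m \<noteq> 0" "u \<noteq> 0"
  shows "img_factor Pt A X L u"
proof -
  have e: "A *v X = (- m) *s u" using assms(1) by (simp add: eq_neg_iff_add_eq_0)
  then have n: "A *v X \<noteq> 0" using assms by simp
  have ue: "u = (- 1 / m) *s (A *v X)" using e assms(2) by (simp add: vector_smult_assoc)
  have "\<exists>c. c \<noteq> 0 \<and> u = c *s (A *v X)"
    by (rule exI[of _ "- 1 / m"]) (use ue assms(2) in simp)
  then show ?thesis unfolding img_factor_def projeq_def using n assms(3) by auto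
qed

lemma line3:
  assumes "X \<noteq> 0" "Y \<notin> vec.span {X}"
  shows "flag X (vec.span {X, Y})"
  unfolding flag_def is_line3_def using assms indep2[OF assms] by (auto intro: vec.span_base)

lemma indep_img:
  fixes A :: "complex^4^3"
  assumes X: "X \<noteq> 0" and Y: "Y \<notin> vec.span {X}"
    and ker: "\<And>v. v \<in> vec.span {X, Y} \<Longrightarrow> v \<noteq> 0 \<Longrightarrow> A *v v \<noteq> 0"
  shows "A *v X \<noteq> 0" "A *v Y \<notin> vec.span {A *v X}"
proof -
  show "A *v X \<noteq> 0" using ker[of X] X by (auto intro: vec.span_base)
  show "A *v Y \<notin> vec.span {A *v X}"
  proof
    assume "A *v Y \<in> vec.span {A *v X}"
    then obtain c where c: "A *v Y = c *s (A *v X)" by (auto simp: vec.span_singleton)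
    have "Y - c *s X \<in> vec.span {X, Y}"
      by (intro vec.span_diff vec.span_scale vec.span_base) auto
    moreover have "Y - c *s X \<noteq> 0"
    proof
      assume "Y - c *s X = 0"
      then have "Y = c *s X" by simp
      then show False using Y by (auto simp: vec.span_singleton)
    qed
    moreover have "A *v (Y - c *s X) = 0" using c by (simp add: matrix_vector_mult_diff_distrib vec.scale)
    ultimately show False using ker by blast
  qed
qed

fun blockc :: "kind \<Rightarrow> complex^4^3 \<Rightarrow> complex^3 \<Rightarrow> complex^4 \<Rightarrow> complex \<Rightarrow> bool" where
  "blockc Pt A u X m = (A *v X + m *s u = 0)"
| "blockc Line A u X m = (bdot u (A *v X) = 0 \<and> m = 0)"

definition blk :: "kind \<Rightarrow> complex^4^3 \<Rightarrow> complex^3 \<Rightarrow> 3 \<Rightarrow> 3 \<Rightarrow> 4 + 3 \<Rightarrow> complex" where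
  "blk k A u e i c = (case k of
      Pt \<Rightarrow> (case c of Inl j \<Rightarrow> A $ i $ j | Inr m \<Rightarrow> if m = e then u $ i else 0)
    | Line \<Rightarrow> (if i = 1 then (case c of Inl j \<Rightarrow> plane A u $ j | Inr m \<Rightarrow> 0)
               else if i = 2 then (case c of Inl j \<Rightarrow> 0 | Inr m \<Rightarrow> if m = e then 1 else 0)
               else 0))"

definition MM :: "kind \<times> kind \<times> kind \<Rightarrow> complex^4^3 \<Rightarrow> complex^4^3 \<Rightarrow> complex^4^3 \<Rightarrow>
   (complex^3) \<times> (complex^3) \<times> (complex^3) \<Rightarrow> complex^(4+3)^(3+(3+3))" where
  "MM t A B C p = (\<chi> r c. case r of
      Inl i \<Rightarrow> blk (fst t) A (fst p) 1 i c
    | Inr (Inl i) \<Rightarrow> blk (fst (snd t)) B (fst (snd p)) 2 i c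
    | Inr (Inr i) \<Rightarrow> blk (snd (snd t)) C (snd (snd p)) 3 i c)"

lemma sum_UNIV_plus: "sum f (UNIV :: ('a::finite + 'b::finite) set) = sum (\<lambda>x. f (Inl x)) UNIV + sum (\<lambda>x. f (Inr x)) UNIV"
  using sum.Plus[of "UNIV :: 'a set" "UNIV :: 'b set" f] by (simp add: UNIV_Plus_UNIV comp_def)

definition xp :: "complex^(4+3) \<Rightarrow> complex^4" where "xp v = (\<chi> j. v $ Inl j)"

lemma blk_row:
  "(\<forall>i. (\<Sum>c\<in>UNIV. blk k A u e i c * v $ c) = 0) \<longleftrightarrow> blockc k A u (xp v) (v $ Inr e)"
proof (cases k)
  case Pt
  have "(\<Sum>c\<in>UNIV. blk k A u e i c * v $ c) = (A *v xp v + (v $ Inr e) *s u) $ i" for i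
  proof -
    have "(\<Sum>m\<in>UNIV. (if m = e then u $ i else 0) * v $ Inr m) = (\<Sum>m\<in>UNIV. if m = e then u $ i * v $ Inr m else 0)"
      by (intro sum.cong) auto
    then show ?thesis using Pt
      by (simp add: blk_def sum_UNIV_plus matrix_vector_mult_def xp_def mult.commute)
  qed
  then show ?thesis using Pt by (simp add: vec_eq_iff)
next
  case Line
  have r1: "(\<Sum>c\<in>UNIV. blk k A u e 1 c * v $ c) = bdot u (A *v xp v)"
    using Line plane_dot[of A u "xp v"] by (simp add: blk_def sum_UNIV_plus xp_def)
  have r2: "(\<Sum>c\<in>UNIV. blk k A u e 2 c * v $ c) = v $ Inr e"
  proof -
    have "(\<Sum>m\<in>UNIV. (if m = e then 1 else 0) * v $ Inr m) = (\<Sum>m\<in>UNIV. if m = e then v $ Inr m else 0)"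
      by (intro sum.cong) auto
    then show ?thesis using Line by (simp add: blk_def sum_UNIV_plus)
  qed
  have r3: "(\<Sum>c\<in>UNIV. blk k A u e 3 c * v $ c) = 0"
    using Line by (simp add: blk_def)
  show ?thesis using r1 r2 r3 Line by (auto simp: forall_3)
qed

lemma forall_plus: "(\<forall>r :: 'a + 'b. P r) \<longleftrightarrow> (\<forall>i. P (Inl i)) \<and> (\<forall>i. P (Inr i))"
  by (metis sum.exhaust)

lemma mm_ker:
  "MM t A B C p *v v = 0 \<longleftrightarrow>
     blockc (fst t) A (fst p) (xp v) (v $ Inr 1) \<and>
     blockc (fst (snd t)) B (fst (snd p)) (xp v) (v $ Inr 2) \<and>
     blockc (snd (snd t)) C (snd (snd p)) (xp v) (v $ Inr 3)"
  unfolding vec_eq_iff forall_plus blk_row[symmetric]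
  by (simp add: MM_def matrix_vector_mult_def)

lemma pf1: "(\<lambda>s. fst s $ i) \<in> polyfun"
proof -
  have "(\<lambda>s. fst s $ i) = (\<lambda>(x, y, z). x $ i)" by auto
  then show ?thesis using polyfun.coord1 by metis
qed
lemma pf2: "(\<lambda>s. fst (snd s) $ i) \<in> polyfun"
proof -
  have "(\<lambda>s. fst (snd s) $ i) = (\<lambda>(x, y, z). y $ i)" by auto
  then show ?thesis using polyfun.coord2 by metis
qed
lemma pf3: "(\<lambda>s. snd (snd s) $ i) \<in> polyfun"
proof -
  have "(\<lambda>s. snd (snd s) $ i) = (\<lambda>(x, y, z). z $ i)" by auto
  then show ?thesis using polyfun.coord3 by metis
qed

lemma blk_pf:
  assumes "\<And>i. (\<lambda>s. g s $ i) \<in> polyfun"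
  shows "(\<lambda>s. blk k A (g s) e i c) \<in> polyfun"
proof -
  have pl: "(\<lambda>s. plane A (g s) $ j) \<in> polyfun" for j
    unfolding plane_def
    by (simp, intro polyfun_sum polyfun.mult assms polyfun.const) auto
  have pif: "f \<in> polyfun \<Longrightarrow> h \<in> polyfun \<Longrightarrow> (\<lambda>s. if P then f s else h s) \<in> polyfun" for f h P
    by (cases P) auto
  show ?thesis
    by (cases k; cases c) (simp_all add: blk_def pif polyfun.const assms pl)
qed

lemma mm_pf: "(\<lambda>s. MM t A B C s $ r $ c) \<in> polyfun"
proof (cases r)
  case (Inl i) then show ?thesis by (simp add: MM_def blk_pf pf1)
next
  case (Inr x) then show ?thesis by (cases x) (simp_all add: MM_def blk_pf pf2 pf3)
qed

lemma img_block:
  assumes "flag X L" "img_factor k A X L w"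
  shows "\<exists>m. blockc k A w X m"
proof (cases k)
  case Pt
  then obtain c where c: "c \<noteq> 0" "w = c *s (A *v X)"
    using assms(2) by (auto simp: img_factor_def projeq_def)
  have "A *v X + (- 1 / c) *s w = 0" using c by (simp add: vector_smult_assoc)
  then show ?thesis using Pt by (metis blockc.simps(1))
next
  case Line
  have "X \<in> L" using assms(1) by (simp add: flag_def)
  then have "A *v X \<in> {w'. bdot w w' = 0}" using assms(2) Line by (auto simp: img_factor_def)
  then show ?thesis using Line by auto
qed

lemma mm_img:
  assumes "s \<in> mv_image t A B C"
  shows "\<exists>v. v \<noteq> 0 \<and> MM t A B C s *v v = 0"
proof -
  obtain k1 k2 k3 where t: "t = (k1, k2, k3)" by (cases t) auto
  obtain w1 w2 w3 where s: "s = (w1, w2, w3)" by (cases s) auto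
  obtain X L where XL: "flag X L" "img_factor k1 A X L w1" "img_factor k2 B X L w2" "img_factor k3 C X L w3"
    using assms by (auto simp: mv_image_def t s)
  obtain m1 m2 m3 where m: "blockc k1 A w1 X m1" "blockc k2 B w2 X m2" "blockc k3 C w3 X m3"
    using img_block XL by metis
  define v :: "complex^(4+3)" where
    "v = (\<chi> c. case c of Inl j \<Rightarrow> X $ j | Inr m \<Rightarrow> if m = 1 then m1 else if m = 2 then m2 else m3)"
  have xv: "xp v = X" by (simp add: xp_def v_def vec_eq_iff)
  have "v \<noteq> 0"
  proof
    assume "v = 0"
    then have "xp v = 0" by (simp add: xp_def vec_eq_iff)
    then show False using XL(1) xv by (simp add: flag_def)
  qed
  moreover have "MM t A B C s *v v = 0"
    unfolding mm_ker using m xv by (simp add: t s v_def)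
  ultimately show ?thesis by blast
qed

lemma mm_closure:
  assumes "p \<in> zariski_closure (mv_image t A B C)"
  shows "\<exists>X m1 m2 m3. (X \<noteq> 0 \<or> m1 \<noteq> 0 \<or> m2 \<noteq> 0 \<or> m3 \<noteq> 0) \<and>
     blockc (fst t) A (fst p) X m1 \<and> blockc (fst (snd t)) B (fst (snd p)) X m2 \<and>
     blockc (snd (snd t)) C (snd (snd p)) X m3"
proof -
  obtain v where v: "v \<noteq> 0" "MM t A B C p *v v = 0"
    using closure_noninj[OF assms mm_img mm_pf] by blast
  have "xp v \<noteq> 0 \<or> v $ Inr 1 \<noteq> 0 \<or> v $ Inr 2 \<noteq> 0 \<or> v $ Inr 3 \<noteq> 0"
  proof (rule ccontr)
    assume "\<not> ?thesis"
    then have "\<forall>b::3. v $ Inr b = 0" "\<forall>j. v $ Inl j = 0" by (auto simp: forall_3 xp_def vec_eq_iff)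
    then have "v $ c = 0" for c
      by (cases c) auto
    then show False using v(1) by (simp add: vec_eq_iff)
  qed
  then show ?thesis using v(2) unfolding mm_ker by blast
qed

definition MP :: "complex^4^3 \<Rightarrow> complex^4^3 \<Rightarrow> complex^4^3 \<Rightarrow>
   (complex^3) \<times> (complex^3) \<times> (complex^3) \<Rightarrow> complex^3^4" where
  "MP A B C p = (\<chi> j k. if k = 1 then plane A (fst p) $ j else if k = 2 then plane B (fst (snd p)) $ j
                        else plane C (snd (snd p)) $ j)"

lemma mp_pf: "(\<lambda>s. MP A B C s $ j $ k) \<in> polyfun"
proof -
  have pl: "(\<lambda>s. plane A (g s) $ j) \<in> polyfun" if "\<And>i. (\<lambda>s. g s $ i) \<in> polyfun" for A g j
    unfolding plane_def
    by (simp, intro polyfun_sum polyfun.mult that polyfun.const) auto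
  show ?thesis
    by (cases "k = 1"; cases "k = 2") (simp_all add: MP_def pl pf1 pf2 pf3)
qed

lemma line_basis:
  assumes "is_line3 L"
  obtains a b where "a \<in> L" "b \<in> L" "\<And>c1 c2. c1 *s a + c2 *s b = 0 \<Longrightarrow> c1 = 0 \<and> c2 = 0"
proof -
  obtain B where B: "B \<subseteq> L" "vec.independent B" "card B = 2"
    using vec.basis_exists[of L] assms unfolding is_line3_def by metis
  then obtain a b where ab: "B = {a, b}" "a \<noteq> b" by (meson card_2_iff)
  have "c1 = 0 \<and> c2 = 0" if h: "c1 *s a + c2 *s b = 0" for c1 c2
  proof -
    define c where "c v = (if v = a then c1 else c2)" for v
    have "(\<Sum>v\<in>B. c v *s v) = c1 *s a + c2 *s b" using ab by (simp add: c_def)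
    then have z: "(\<Sum>v\<in>B. c v *s v) = 0" using h by simp
    have "finite B \<and> (\<forall>c. (\<Sum>v\<in>B. c v *s v) = 0 \<longrightarrow> (\<forall>v\<in>B. c v = 0))"
      using B(2) unfolding vec.independent_explicit .
    then have "\<forall>v\<in>B. c v = 0" using z by blast
    then have "c a = 0" "c b = 0" using ab(1) by auto
    then show ?thesis using ab(2) by (auto simp: c_def split: if_splits)
  qed
  then show ?thesis using that B ab by blast
qed

lemma ann_dim:
  assumes "is_line3 L"
  obtains K where "vec.subspace K" "vec.dim K \<le> 2" "\<And>v. (\<forall>x\<in>L. (\<Sum>j\<in>UNIV. v $ j * x $ j) = 0) \<Longrightarrow> v \<in> K"
proof -
  obtain a b where ab: "a \<in> L" "b \<in> L" "\<And>c1 c2. c1 *s a + c2 *s b = 0 \<Longrightarrow> c1 = 0 \<and> c2 = 0"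
    using line_basis[OF assms] by blast
  define N :: "complex^4^2" where "N = (\<chi> i. if i = 1 then a else b)"
  have "\<exists>G. N ** G = mat 1"
    unfolding matrix_right_invertible_independent_rows
  proof (intro allI impI ballI)
    fix c i assume "(\<Sum>i\<in>UNIV. c i *s row i N) = 0"
    then have "c 1 *s a + c 2 *s b = 0" by (simp add: sum_2 N_def row_def)
    then show "c i = 0" using ab(3) exhaust_2[of i] by metis
  qed
  then obtain G where G: "N ** G = mat 1" by blast
  have injG: "inj ((*v) G)"
    unfolding vec.inj_iff_eq_0
    by (metis G matrix_vector_mul_assoc matrix_vector_mul_lid matrix_vector_mult_0_right)
  have d2: "vec.dim (range ((*v) G)) = 2"
    using vec.dim_image_eq[of "(*v) G" UNIV] injG by (simp add: vec_dim_card inj_on_subset card_cart_basis)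
  let ?K = "{v. N *v v = 0}"
  have "range ((*v) G) \<inter> ?K \<subseteq> {0}"
  proof
    fix v assume "v \<in> range ((*v) G) \<inter> ?K"
    then obtain w where w: "v = G *v w" "N *v v = 0" by auto
    then have "w = 0" by (metis G matrix_vector_mul_assoc matrix_vector_mul_lid)
    then show "v \<in> {0}" using w by simp
  qed
  then have "vec.dim (range ((*v) G)) + vec.dim ?K \<le> CARD(4)"
    by (intro dim_cap) (auto intro: vec.subspace_UNIV vec.subspace_image ker_sub)
  then have "vec.dim ?K \<le> 2" using d2 by simp
  moreover have "v \<in> ?K" if "\<forall>x\<in>L. (\<Sum>j\<in>UNIV. v $ j * x $ j) = 0" for v
  proof -
    have "(N *v v) $ i = 0" for i
      using that ab(1,2) exhaust_2[of i]
      by (auto simp: N_def matrix_vector_mult_def mult.commute)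
    then show ?thesis by (simp add: vec_eq_iff)
  qed
  ultimately show ?thesis using that ker_sub by blast
qed

lemma mp_img:
  assumes "s \<in> mv_image (Line, Line, Line) A B C"
  shows "\<exists>v. v \<noteq> 0 \<and> MP A B C s *v v = 0"
proof (rule ccontr)
  assume na: "\<not> ?thesis"
  obtain w1 w2 w3 where s: "s = (w1, w2, w3)" by (cases s) auto
  obtain X L where XL: "flag X L" "img_factor Line A X L w1" "img_factor Line B X L w2" "img_factor Line C X L w3"
    using assms by (auto simp: mv_image_def s)
  have lL: "is_line3 L" using XL(1) by (simp add: flag_def)
  obtain K where K: "vec.subspace K" "vec.dim K \<le> 2"
    "\<And>v. (\<forall>x\<in>L. (\<Sum>j\<in>UNIV. v $ j * x $ j) = 0) \<Longrightarrow> v \<in> K"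
    using ann_dim[OF lL] by blast
  have pK: "plane A' w \<in> K" if "img_factor Line A' X L w" for A' w
  proof (rule K(3), intro ballI)
    fix x assume "x \<in> L"
    then have "A' *v x \<in> {w'. bdot w w' = 0}" using that by (auto simp: img_factor_def)
    then show "(\<Sum>j\<in>UNIV. plane A' w $ j * x $ j) = 0" by (simp add: plane_dot)
  qed
  have cols: "columns (MP A B C s) \<subseteq> K"
  proof
    fix v assume "v \<in> columns (MP A B C s)"
    then obtain k where k: "v = column k (MP A B C s)" by (auto simp: columns_def)
    consider "k = 1" | "k = 2" | "k = 3" using exhaust_3 by blast
    then show "v \<in> K"
    proof cases
      case 1 then have "v = plane A w1" using k by (simp add: column_def MP_def s vec_eq_iff)
      then show ?thesis using pK XL by simp
    next
      case 2 then have "v = plane B w2" using k by (simp add: column_def MP_def s vec_eq_iff)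
      then show ?thesis using pK XL by simp
    next
      case 3 then have "v = plane C w3" using k by (simp add: column_def MP_def s vec_eq_iff)
      then show ?thesis using pK XL by simp
    qed
  qed
  have rK: "range ((*v) (MP A B C s)) \<subseteq> K"
  proof -
    have "vec.span (columns (MP A B C s)) \<subseteq> K" using cols K(1) by (rule vec.span_minimal)
    then show ?thesis using matrix_vector_mult_in_columnspace_gen by blast
  qed
  have "inj ((*v) (MP A B C s))" using na unfolding vec.inj_iff_eq_0 by blast
  then have "vec.dim (range ((*v) (MP A B C s))) = 3"
    using vec.dim_image_eq[of "(*v) (MP A B C s)" UNIV] by (simp add: vec_dim_card inj_on_subset card_cart_basis)
  moreover have "vec.dim (range ((*v) (MP A B C s))) \<le> vec.dim K" using rK by (rule vec.dim_subset)
  ultimately show False using K(2) by simp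
qed

lemma mp_closure:
  assumes "(u1, u2, u3) \<in> zariski_closure (mv_image (Line, Line, Line) A B C)"
  shows "\<exists>c1 c2 c3. (c1 \<noteq> 0 \<or> c2 \<noteq> 0 \<or> c3 \<noteq> 0) \<and>
     (\<forall>x. c1 * bdot u1 (A *v x) + c2 * bdot u2 (B *v x) + c3 * bdot u3 (C *v x) = 0)"
proof -
  obtain c where c: "c \<noteq> 0" "MP A B C (u1, u2, u3) *v c = 0"
    using closure_noninj[OF assms mp_img mp_pf] by blast
  have "c $ 1 \<noteq> 0 \<or> c $ 2 \<noteq> 0 \<or> c $ 3 \<noteq> 0" using c(1) by (auto simp: vec_eq_iff forall_3)
  moreover have "c $ 1 * bdot u1 (A *v x) + c $ 2 * bdot u2 (B *v x) + c $ 3 * bdot u3 (C *v x) = 0" for x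
  proof -
    have "0 = (\<Sum>j\<in>UNIV. (MP A B C (u1, u2, u3) *v c) $ j * x $ j)" using c(2) by simp
    also have "\<dots> = (\<Sum>j\<in>UNIV. (c $ 1 * plane A u1 $ j + c $ 2 * plane B u2 $ j + c $ 3 * plane C u3 $ j) * x $ j)"
      by (simp add: matrix_vector_mult_def MP_def sum_3 mult.commute)
    also have "\<dots> = c $ 1 * (\<Sum>j\<in>UNIV. plane A u1 $ j * x $ j) + c $ 2 * (\<Sum>j\<in>UNIV. plane B u2 $ j * x $ j)
        + c $ 3 * (\<Sum>j\<in>UNIV. plane C u3 $ j * x $ j)"
      by (simp add: sum_distrib_left sum.distrib algebra_simps)
    finally show ?thesis by (simp add: plane_dot)
  qed
  ultimately show ?thesis by blast
qed

lemma span_ann: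
  assumes "bdot u (A *v X) = 0" "bdot u (A *v Y) = 0" "v \<in> vec.span {X, Y}"
  shows "bdot u (A *v v) = 0"
proof -
  have "vec.span {X, Y} \<subseteq> {v. bdot u (A *v v) = 0}"
    by (rule vec.span_minimal) (use assms bdot_sub in auto)
  then show ?thesis using assms(3) by blast
qed

lemma line_from:
  fixes A :: "complex^4^3"
  assumes X: "X \<noteq> 0" and Y: "Y \<notin> vec.span {X}" and u: "u \<noteq> 0"
    and ann: "\<And>v. v \<in> vec.span {X, Y} \<Longrightarrow> bdot u (A *v v) = 0"
    and ker: "\<And>v. v \<in> vec.span {X, Y} \<Longrightarrow> v \<noteq> 0 \<Longrightarrow> A *v v \<noteq> 0"
  shows "img_factor Line A X (vec.span {X, Y}) u"
proof -
  have "X \<in> vec.span {X, Y}" "Y \<in> vec.span {X, Y}" by (auto intro: vec.span_base)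
  then show ?thesis using indep_img[OF X Y ker] line_img[OF u] ann by blast
qed

lemma blk0: "blockc k A u 0 m \<Longrightarrow> u \<noteq> 0 \<Longrightarrow> m = 0"
  by (cases k) auto

lemma mzero:
  assumes "camera A1" "camera A2" "center A1 \<noteq> center A2" "A1 *v X = 0" "X \<noteq> 0"
    "A2 *v X + m *s u = 0" "avoids_epipole Pt A2 A1 u" "u \<noteq> 0"
  shows False
proof (cases "m = 0")
  case True
  then have "A2 *v X = 0" using assms(6) by simp
  then show False using centers_eq[OF assms(1,2,4) _ assms(5)] assms(3) by blast
next
  case False
  have "projeq u (A2 *v X)" using pt_img[OF assms(6) False assms(8)] by (simp add: img_factor_def)
  then show False using assms(4,5,7) by (auto simp: avoids_epipole_def)
qed

lemma core_LLL:
  fixes A1 A2 A3 :: "complex^4^3"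
  assumes u: "u1 \<noteq> 0" "u2 \<noteq> 0" "u3 \<noteq> 0" and c3: "c3 \<noteq> 0"
    and dep: "\<And>x. c1 * bdot u1 (A1 *v x) + c2 * bdot u2 (A2 *v x) + c3 * bdot u3 (A3 *v x) = 0"
    and a1: "avoids_epipole Line A2 A1 u2" and a2: "avoids_epipole Line A1 A2 u1"
    and a3: "avoids_epipole Line A1 A3 u1"
  shows "\<exists>X L. flag X L \<and> img_factor Line A1 X L u1 \<and> img_factor Line A2 X L u2 \<and> img_factor Line A3 X L u3"
proof -
  define Q :: "complex^4^2" where "Q = (\<chi> i. if i = 1 then plane A1 u1 else plane A2 u2)"
  have Qe: "Q *v v = 0 \<longleftrightarrow> bdot u1 (A1 *v v) = 0 \<and> bdot u2 (A2 *v v) = 0" for v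
    by (simp add: vec_eq_iff forall_2 Q_def matrix_vector_mult_def plane_dot)
  obtain X where X: "X \<noteq> 0" "Q *v X = 0" using ker_exists[of Q] by auto
  obtain Y where Y: "Y \<notin> vec.span {X}" "Q *v Y = 0" using avoid_line[OF X(1), of Q] by auto
  let ?S = "vec.span {X, Y}"
  have f1: "bdot u1 (A1 *v v) = 0" and f2: "bdot u2 (A2 *v v) = 0" if "v \<in> ?S" for v
    using span_ann[of u1 A1 X Y v] span_ann[of u2 A2 X Y v] that X(2) Y(2) Qe by auto
  have f3: "bdot u3 (A3 *v v) = 0" if "v \<in> ?S" for v
    using dep[of v] f1[OF that] f2[OF that] c3 by simp
  have i1: "img_factor Line A1 X ?S u1"
    using line_from[OF X(1) Y(1) u(1) f1] f2 a1 by (force simp: avoids_epipole_def)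
  have i2: "img_factor Line A2 X ?S u2"
    using line_from[OF X(1) Y(1) u(2) f2] f1 a2 by (force simp: avoids_epipole_def)
  have i3: "img_factor Line A3 X ?S u3"
    using line_from[OF X(1) Y(1) u(3) f3] f1 a3 by (force simp: avoids_epipole_def)
  show ?thesis using line3[OF X(1) Y(1)] i1 i2 i3 by blast
qed

lemma core_PLL:
  fixes A1 A2 A3 :: "complex^4^3"
  assumes u: "u1 \<noteq> 0" "u2 \<noteq> 0" "u3 \<noteq> 0"
    and nz: "X \<noteq> 0 \<or> m1 \<noteq> 0 \<or> m2 \<noteq> 0 \<or> m3 \<noteq> 0"
    and b1: "blockc Pt A1 u1 X m1" and b2: "blockc Line A2 u2 X m2" and b3: "blockc Line A3 u3 X m3"
    and a1: "avoids_epipole Line A2 A1 u2" and a2: "avoids_epipole Line A3 A2 u3"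
    and a3: "avoids_epipole Line A2 A3 u2"
  shows "\<exists>X L. flag X L \<and> img_factor Pt A1 X L u1 \<and> img_factor Line A2 X L u2 \<and> img_factor Line A3 X L u3"
proof -
  have X: "X \<noteq> 0" using nz blk0[OF _ u(1), of Pt A1 m1] b1 b2 b3 by auto
  have m1: "m1 \<noteq> 0"
  proof
    assume "m1 = 0"
    then have "A1 *v X = 0" using b1 by simp
    then show False using a1 X b2 by (auto simp: avoids_epipole_def)
  qed
  define Q :: "complex^4^2" where "Q = (\<chi> i. if i = 1 then plane A2 u2 else plane A3 u3)"
  have Qe: "Q *v v = 0 \<longleftrightarrow> bdot u2 (A2 *v v) = 0 \<and> bdot u3 (A3 *v v) = 0" for v
    by (simp add: vec_eq_iff forall_2 Q_def matrix_vector_mult_def plane_dot)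
  obtain Y where Y: "Y \<notin> vec.span {X}" "Q *v Y = 0" using avoid_line[OF X, of Q] by auto
  let ?S = "vec.span {X, Y}"
  have f2: "bdot u2 (A2 *v v) = 0" and f3: "bdot u3 (A3 *v v) = 0" if "v \<in> ?S" for v
    using span_ann[of u2 A2 X Y v] span_ann[of u3 A3 X Y v] that b2 b3 Y(2) Qe by auto
  have i2: "img_factor Line A2 X ?S u2"
    using line_from[OF X Y(1) u(2) f2] f3 a2 by (force simp: avoids_epipole_def)
  have i3: "img_factor Line A3 X ?S u3"
    using line_from[OF X Y(1) u(3) f3] f2 a3 by (force simp: avoids_epipole_def)
  have i1: "img_factor Pt A1 X ?S u1" using pt_img[of A1 X m1 u1] b1 m1 u(1) by simp
  show ?thesis using line3[OF X Y(1)] i1 i2 i3 by blast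
qed

lemma core_PPL:
  fixes A1 A2 A3 :: "complex^4^3"
  assumes cam: "camera A1" "camera A2" "camera A3" and cen: "center A1 \<noteq> center A2"
    and u: "u1 \<noteq> 0" "u2 \<noteq> 0" "u3 \<noteq> 0"
    and nz: "X \<noteq> 0 \<or> m1 \<noteq> 0 \<or> m2 \<noteq> 0 \<or> m3 \<noteq> 0"
    and b1: "blockc Pt A1 u1 X m1" and b2: "blockc Pt A2 u2 X m2" and b3: "blockc Line A3 u3 X m3"
    and a1: "avoids_epipole Pt A2 A1 u2" and a2: "avoids_epipole Pt A1 A2 u1"
    and a3: "avoids_epipole Pt A1 A3 u1"
  shows "\<exists>X L. flag X L \<and> img_factor Pt A1 X L u1 \<and> img_factor Pt A2 X L u2 \<and> img_factor Line A3 X L u3"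
proof -
  have X: "X \<noteq> 0" using nz blk0[OF _ u(1), of Pt A1 m1] blk0[OF _ u(2), of Pt A2 m2] b1 b2 b3 by auto
  have m1: "m1 \<noteq> 0"
  proof
    assume "m1 = 0"
    then have "A1 *v X = 0" using b1 by simp
    then show False using mzero[OF cam(1,2) cen _ X _ a1 u(2)] b2 by simp
  qed
  have m2: "m2 \<noteq> 0"
  proof
    assume "m2 = 0"
    then have "A2 *v X = 0" using b2 by simp
    then show False using mzero[OF cam(2,1) cen[symmetric] _ X _ a2 u(1)] b1 by simp
  qed
  have i1: "img_factor Pt A1 X L u1" for L using pt_img[of A1 X m1 u1] b1 m1 u(1) by simp
  have i2: "img_factor Pt A2 X L u2" for L using pt_img[of A2 X m2 u2] b2 m2 u(2) by simp
  have n3: "A3 *v X \<noteq> 0"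
  proof
    assume "A3 *v X = 0"
    moreover have "projeq u1 (A1 *v X)" using i1 by (simp add: img_factor_def)
    ultimately show False using a3 X by (auto simp: avoids_epipole_def)
  qed
  define Q :: "complex^3^1" where "Q = (\<chi> i. u3)"
  obtain w where w: "w \<notin> vec.span {A3 *v X}" "Q *v w = 0" using avoid_line[OF n3, of Q] by auto
  have bw: "bdot u3 w = 0" using w(2) by (simp add: Q_def vec_eq_iff matrix_vector_mult_def bdot_def)
  obtain G where G: "A3 ** G = mat 1" using cam_right_inv[OF cam(3)] by blast
  define Y where "Y = G *v w"
  have AY: "A3 *v Y = w" unfolding Y_def by (metis G matrix_vector_mul_assoc matrix_vector_mul_lid)
  have Y: "Y \<notin> vec.span {X}"
  proof
    assume "Y \<in> vec.span {X}"
    then obtain c where "Y = c *s X" by (auto simp: vec.span_singleton)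
    then have "w = c *s (A3 *v X)" using AY by (simp add: vec.scale)
    then show False using w(1) by (auto simp: vec.span_singleton)
  qed
  have i3: "img_factor Line A3 X (vec.span {X, Y}) u3"
    using line_img[OF u(3) _ _ n3] b3 bw w(1) AY by simp
  show ?thesis using line3[OF X Y] i1 i2 i3 by blast
qed

lemma core_PPP:
  fixes A1 A2 A3 :: "complex^4^3"
  assumes cam: "camera A1" "camera A2" "camera A3" and cen: "center A1 \<noteq> center A2" "center A1 \<noteq> center A3"
    and u: "u1 \<noteq> 0" "u2 \<noteq> 0" "u3 \<noteq> 0"
    and nz: "X \<noteq> 0 \<or> m1 \<noteq> 0 \<or> m2 \<noteq> 0 \<or> m3 \<noteq> 0"
    and b1: "blockc Pt A1 u1 X m1" and b2: "blockc Pt A2 u2 X m2" and b3: "blockc Pt A3 u3 X m3"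
    and a1: "avoids_epipole Pt A2 A1 u2" and a2: "avoids_epipole Pt A1 A2 u1"
    and a3: "avoids_epipole Pt A1 A3 u1"
  shows "\<exists>X L. flag X L \<and> img_factor Pt A1 X L u1 \<and> img_factor Pt A2 X L u2 \<and> img_factor Pt A3 X L u3"
proof -
  have X: "X \<noteq> 0" using nz blk0[OF _ u(1), of Pt A1 m1] blk0[OF _ u(2), of Pt A2 m2]
      blk0[OF _ u(3), of Pt A3 m3] b1 b2 b3 by auto
  have m1: "m1 \<noteq> 0"
  proof
    assume "m1 = 0"
    then have "A1 *v X = 0" using b1 by simp
    then show False using mzero[OF cam(1,2) cen(1) _ X _ a1 u(2)] b2 by simp
  qed
  have m2: "m2 \<noteq> 0"
  proof
    assume "m2 = 0"
    then have "A2 *v X = 0" using b2 by simp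
    then show False using mzero[OF cam(2,1) cen(1)[symmetric] _ X _ a2 u(1)] b1 by simp
  qed
  have m3: "m3 \<noteq> 0"
  proof
    assume "m3 = 0"
    then have "A3 *v X = 0" using b3 by simp
    then show False using mzero[OF cam(3,1) cen(2)[symmetric] _ X _ a3 u(1)] b1 by simp
  qed
  obtain Y where Y: "Y \<notin> vec.span {X}" "(0 :: complex^4^1) *v Y = 0" using avoid_line[OF X, of "0 :: complex^4^1"] by auto
  have i1: "img_factor Pt A1 X L u1" for L using pt_img[of A1 X m1 u1] b1 m1 u(1) by simp
  have i2: "img_factor Pt A2 X L u2" for L using pt_img[of A2 X m2 u2] b2 m2 u(2) by simp
  have i3: "img_factor Pt A3 X L u3" for L using pt_img[of A3 X m3 u3] b3 m3 u(3) by simp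
  show ?thesis using line3[OF X Y(1)] i1 i2 i3 by blast
qed

theorem lemma3p5:
  fixes A B C :: "complex^4^3"
    and t :: "kind \<times> kind \<times> kind"
    and p :: "(complex^3) \<times> (complex^3) \<times> (complex^3)"
  assumes "camera A" and "camera B" and "camera C"
    and "center A \<noteq> center B" and "center A \<noteq> center C" and "center B \<noteq> center C"
    and "t \<in> {(Pt, Line, Line), (Line, Line, Line), (Pt, Pt, Line), (Pt, Line, Pt), (Pt, Pt, Pt)}"
    and "fst p \<noteq> 0" and "fst (snd p) \<noteq> 0" and "snd (snd p) \<noteq> 0"
    and "avoids_epipoles t A B C p"
    and "p \<in> multiview_variety t A B C"
  shows "consistent t A B C p"
proof -
  obtain u1 u2 u3 where p: "p = (u1, u2, u3)" by (cases p) auto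
  have u: "u1 \<noteq> 0" "u2 \<noteq> 0" "u3 \<noteq> 0" using assms(8-10) p by auto
  have cl: "p \<in> zariski_closure (mv_image t A B C)" using assms(12) by (simp add: multiview_variety_def)
  have av: "avoids_epipole (fst t) A B u1" "avoids_epipole (fst t) A C u1"
     "avoids_epipole (fst (snd t)) B A u2" "avoids_epipole (fst (snd t)) B C u2"
     "avoids_epipole (snd (snd t)) C A u3" "avoids_epipole (snd (snd t)) C B u3"
    using assms(11) by (auto simp: avoids_epipoles_def p split: prod.splits)
  consider "t = (Pt, Line, Line)" | "t = (Line, Line, Line)" | "t = (Pt, Pt, Line)" | "t = (Pt, Line, Pt)"
    | "t = (Pt, Pt, Pt)" using assms(7) by blast
  then show ?thesis
  proof cases
    case 1
    obtain X m1 m2 m3 where m: "X \<noteq> 0 \<or> m1 \<noteq> 0 \<or> m2 \<noteq> 0 \<or> m3 \<noteq> 0"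
      "blockc Pt A u1 X m1" "blockc Line B u2 X m2" "blockc Line C u3 X m3"
      using mm_closure[OF cl] by (auto simp: 1 p)
    show ?thesis using core_PLL[OF u m] av by (simp add: 1 p consistent_def)
  next
    case 2
    note tL = 2
    obtain c1 c2 c3 where c: "c1 \<noteq> 0 \<or> c2 \<noteq> 0 \<or> c3 \<noteq> 0"
      "\<And>x. c1 * bdot u1 (A *v x) + c2 * bdot u2 (B *v x) + c3 * bdot u3 (C *v x) = 0"
      using mp_closure[of u1 u2 u3 A B C] cl by (auto simp: tL p)
    consider "c3 \<noteq> 0" | "c2 \<noteq> 0" | "c1 \<noteq> 0" using c(1) by blast
    then show ?thesis
    proof cases
      case 1
      show ?thesis using core_LLL[OF u 1 c(2)] av by (simp add: tL p consistent_def)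
    next
      case 3
      have d: "c2 * bdot u2 (B *v x) + c3 * bdot u3 (C *v x) + c1 * bdot u1 (A *v x) = 0" for x
        using c(2)[of x] by (simp add: algebra_simps)
      obtain X L where "flag X L" "img_factor Line B X L u2" "img_factor Line C X L u3" "img_factor Line A X L u1"
        using core_LLL[OF u(2,3,1) 3 d] av by (auto simp: tL)
      then show ?thesis by (auto simp: tL p consistent_def)
    next
      case 2
      have d: "c1 * bdot u1 (A *v x) + c3 * bdot u3 (C *v x) + c2 * bdot u2 (B *v x) = 0" for x
        using c(2)[of x] by (simp add: algebra_simps)
      obtain X L where "flag X L" "img_factor Line A X L u1" "img_factor Line C X L u3" "img_factor Line B X L u2"
        using core_LLL[OF u(1,3,2) 2 d] av by (auto simp: tL)
      then show ?thesis by (auto simp: tL p consistent_def)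
    qed
  next
    case 3
    obtain X m1 m2 m3 where m: "X \<noteq> 0 \<or> m1 \<noteq> 0 \<or> m2 \<noteq> 0 \<or> m3 \<noteq> 0"
      "blockc Pt A u1 X m1" "blockc Pt B u2 X m2" "blockc Line C u3 X m3"
      using mm_closure[OF cl] by (auto simp: 3 p)
    show ?thesis using core_PPL[OF assms(1-4) u m] av by (simp add: 3 p consistent_def)
  next
    case 4
    obtain X m1 m2 m3 where m: "X \<noteq> 0 \<or> m1 \<noteq> 0 \<or> m2 \<noteq> 0 \<or> m3 \<noteq> 0"
      "blockc Pt A u1 X m1" "blockc Line B u2 X m2" "blockc Pt C u3 X m3"
      using mm_closure[OF cl] by (auto simp: 4 p)
    have m': "X \<noteq> 0 \<or> m1 \<noteq> 0 \<or> m3 \<noteq> 0 \<or> m2 \<noteq> 0" using m(1) by blast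
    obtain X L where "flag X L" "img_factor Pt A X L u1" "img_factor Pt C X L u3" "img_factor Line B X L u2"
      using core_PPL[OF assms(1,3,2,5) u(1,3,2) m' m(2) m(4) m(3)] av by (auto simp: 4)
    then show ?thesis by (auto simp: 4 p consistent_def)
  next
    case 5
    obtain X m1 m2 m3 where m: "X \<noteq> 0 \<or> m1 \<noteq> 0 \<or> m2 \<noteq> 0 \<or> m3 \<noteq> 0"
      "blockc Pt A u1 X m1" "blockc Pt B u2 X m2" "blockc Pt C u3 X m3"
      using mm_closure[OF cl] by (auto simp: 5 p)
    show ?thesis using core_PPP[OF assms(1-5) u m] av by (simp add: 5 p consistent_def)
  qed
qed

end
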